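(* (a) There is an SSSCG with one follower, in which the leader's cost functions are weakly monotonic but the follower's are not, whose unique OSE and unique PSE prescribe the leader a mixed strategy: $R=\{r_1,r_2\}$, $c_{r_k,\ell}(1)=1$, $c_{r_k,\ell}(2)=2$, $c_{r_k,f}(1)=2$, $c_{r_k,f}(2)=1$ for $k=1,2$; the leader's equilibrium strategy is $\sigma_\ell(r_1)=\sigma_\ell(r_2)=\tfrac12$. (b) There is an SSSCG with one follower, in which the follower's cost functions are weakly monotonic but the leader's are not, whose unique OSE and unique PSE prescribe the leader a mixed strategy: $R=\{r_1,r_2\}$, $c_{r_k,\ell}(1)=2$, $c_{r_k,\ell}(2)=0$, $c_{r_k,f}(1)=1$, $c_{r_k,f}(2)=2$ for $k=1,2$; the leader's equilibrium strategy is $\sigma_\ell(r_1)=\sigma_\ell(r_2)=\tfrac12$.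
   Context: A symmetric Stackelberg singleton congestion game (SSSCG) consists of a leader $\ell$, a finite set $F$ of followers, a finite set $R$ of resources which every player may select (each player selects exactly one), and cost functions $c_{i,\ell},c_{i,f}:\mathbb N\to\mathbb Q$ ($i\in R$) for the leader and the followers with $c_{i,\ell}(0)=c_{i,f}(0)=0$. The leader commits to a probability distribution $\sigma_\ell$ on $R$ (pure if it puts probability $1$ on one resource). A followers' configuration is $\nu\in\mathbb N^R$ with $\sum_i\nu_i=|F|$. The followers' expected cost of resource $i$ with $x$ followers is $c^{\sigma_\ell}_{i,f}(x)=\sigma_\ell(i)c_{i,f}(x+1)+(1-\sigma_\ell(i))c_{i,f}(x)$; the leader's cost is $c_\ell^{(\sigma_\ell,\nu)}=\sum_{i\in R}\sigma_\ell(i)c_{i,\ell}(\nu_i+1)$. $\nu$ is a Nash equilibrium for $\sigma_\ell$ ($\nu\in E^{\sigma_\ell}$) if for all $i$ with $\nu_i>0$ and all $j\ne i$, $c^{\sigma_\ell}_{i,f}(\nu_i)\le c^{\sigma_\ell}_{j,f}(\nu_j+1)$. An OSE is a pair $(\sigma_\ell,\nu)$ with $\nu\in E^{\sigma_\ell}$ minimizing $c_\ell^{(\sigma_\ell,\nu)}$ over all such pairs. A PSE is a pair $(\sigma_\ell,\nu)$ such that $\sigma_\ell$ attains the minimum over all leader strategies of $\max_{\nu'\in E^{\sigma_\ell}}c_\ell^{(\sigma_\ell,\nu')}$ and $\nu\in E^{\sigma_\ell}$ attains that maximum. Weakly monotonic: $c(x)\le c(x+1)$ for all $x$. *)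

theory Defs
  imports Complex_Main
begin

text \<open>R : set of resources, n : number of followers (|F|),
  cl i / cf i : cost functions of the leader / the followers on resource i
  (rational valued, c(0) = 0).\<close>

definition sscg :: "'r set \<Rightarrow> ('r \<Rightarrow> nat \<Rightarrow> rat) \<Rightarrow> ('r \<Rightarrow> nat \<Rightarrow> rat) \<Rightarrow> bool" where
  "sscg R cl cf \<longleftrightarrow> finite R \<and> R \<noteq> {} \<and> (\<forall>i\<in>R. cl i 0 = 0 \<and> cf i 0 = 0)"

definition leader_strategy :: "'r set \<Rightarrow> ('r \<Rightarrow> real) \<Rightarrow> bool" where
  "leader_strategy R \<sigma> \<longleftrightarrow> (\<forall>i\<in>R. 0 \<le> \<sigma> i) \<and> (\<forall>i. i \<notin> R \<longrightarrow> \<sigma> i = 0) \<and> (\<Sum>i\<in>R. \<sigma> i) = 1"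

definition pure_strategy :: "'r set \<Rightarrow> ('r \<Rightarrow> real) \<Rightarrow> bool" where
  "pure_strategy R \<sigma> \<longleftrightarrow> (\<exists>i\<in>R. \<sigma> i = 1)"

definition followers_config :: "'r set \<Rightarrow> nat \<Rightarrow> ('r \<Rightarrow> nat) \<Rightarrow> bool" where
  "followers_config R n \<nu> \<longleftrightarrow> (\<forall>i. i \<notin> R \<longrightarrow> \<nu> i = 0) \<and> (\<Sum>i\<in>R. \<nu> i) = n"

definition fcost :: "('r \<Rightarrow> real) \<Rightarrow> ('r \<Rightarrow> nat \<Rightarrow> rat) \<Rightarrow> 'r \<Rightarrow> nat \<Rightarrow> real" where
  "fcost \<sigma> cf i x = \<sigma> i * of_rat (cf i (x + 1)) + (1 - \<sigma> i) * of_rat (cf i x)"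

definition lcost :: "'r set \<Rightarrow> ('r \<Rightarrow> nat \<Rightarrow> rat) \<Rightarrow> ('r \<Rightarrow> real) \<Rightarrow> ('r \<Rightarrow> nat) \<Rightarrow> real" where
  "lcost R cl \<sigma> \<nu> = (\<Sum>i\<in>R. \<sigma> i * of_rat (cl i (\<nu> i + 1)))"

definition is_NE :: "'r set \<Rightarrow> nat \<Rightarrow> ('r \<Rightarrow> nat \<Rightarrow> rat) \<Rightarrow> ('r \<Rightarrow> real) \<Rightarrow> ('r \<Rightarrow> nat) \<Rightarrow> bool" where
  "is_NE R n cf \<sigma> \<nu> \<longleftrightarrow> followers_config R n \<nu> \<and>
     (\<forall>i\<in>R. \<nu> i > 0 \<longrightarrow> (\<forall>j\<in>R. j \<noteq> i \<longrightarrow> fcost \<sigma> cf i (\<nu> i) \<le> fcost \<sigma> cf j (\<nu> j + 1)))"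

definition is_OSE :: "'r set \<Rightarrow> nat \<Rightarrow> ('r \<Rightarrow> nat \<Rightarrow> rat) \<Rightarrow> ('r \<Rightarrow> nat \<Rightarrow> rat) \<Rightarrow> ('r \<Rightarrow> real) \<Rightarrow> ('r \<Rightarrow> nat) \<Rightarrow> bool" where
  "is_OSE R n cl cf \<sigma> \<nu> \<longleftrightarrow> leader_strategy R \<sigma> \<and> is_NE R n cf \<sigma> \<nu> \<and>
     (\<forall>\<sigma>' \<nu>'. leader_strategy R \<sigma>' \<and> is_NE R n cf \<sigma>' \<nu>' \<longrightarrow> lcost R cl \<sigma> \<nu> \<le> lcost R cl \<sigma>' \<nu>')"

definition is_PSE :: "'r set \<Rightarrow> nat \<Rightarrow> ('r \<Rightarrow> nat \<Rightarrow> rat) \<Rightarrow> ('r \<Rightarrow> nat \<Rightarrow> rat) \<Rightarrow> ('r \<Rightarrow> real) \<Rightarrow> ('r \<Rightarrow> nat) \<Rightarrow> bool" where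
  "is_PSE R n cl cf \<sigma> \<nu> \<longleftrightarrow> leader_strategy R \<sigma> \<and> is_NE R n cf \<sigma> \<nu> \<and>
     (\<forall>\<nu>'. is_NE R n cf \<sigma> \<nu>' \<longrightarrow> lcost R cl \<sigma> \<nu>' \<le> lcost R cl \<sigma> \<nu>) \<and>
     (\<forall>\<sigma>'. leader_strategy R \<sigma>' \<longrightarrow> (\<exists>\<nu>'. is_NE R n cf \<sigma>' \<nu>' \<and> lcost R cl \<sigma> \<nu> \<le> lcost R cl \<sigma>' \<nu>'))"

definition weakly_monotonic :: "(nat \<Rightarrow> rat) \<Rightarrow> bool" where
  "weakly_monotonic c \<longleftrightarrow> (\<forall>x. c x \<le> c (x + 1))"

text \<open>The two example games. Resources r1 = 0, r2 = 1 (type nat); one follower.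
  Only the values at loads 0,1,2 matter (one leader, one follower); beyond
  load 2 the costs are extended constantly.\<close>

definition ex_R :: "nat set" where "ex_R = {0, 1}"

definition cl_a :: "nat \<Rightarrow> nat \<Rightarrow> rat" where
  "cl_a i x = (if x = 0 then 0 else if x = 1 then 1 else 2)"
definition cf_a :: "nat \<Rightarrow> nat \<Rightarrow> rat" where
  "cf_a i x = (if x = 0 then 0 else if x = 1 then 2 else 1)"
definition cl_b :: "nat \<Rightarrow> nat \<Rightarrow> rat" where
  "cl_b i x = (if x = 0 then 0 else if x = 1 then 2 else 0)"
definition cf_b :: "nat \<Rightarrow> nat \<Rightarrow> rat" where
  "cf_b i x = (if x = 0 then 0 else if x = 1 then 1 else 2)"

definition half_strategy :: "nat \<Rightarrow> real" where
  "half_strategy i = (if i \<in> ex_R then 1/2 else 0)"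

end

theory Submission imports Defs begin
lemma ls_iff: "leader_strategy ex_R \<sigma> \<longleftrightarrow> \<sigma> 0 \<ge> 0 \<and> \<sigma> 1 \<ge> 0 \<and> \<sigma> 0 + \<sigma> 1 = 1 \<and> (\<forall>i. i \<noteq> 0 \<and> i \<noteq> 1 \<longrightarrow> \<sigma> i = 0)"
  by (auto simp: leader_strategy_def ex_R_def)
lemma fc_iff: "followers_config ex_R 1 \<nu> \<longleftrightarrow> ((\<nu> 0 = 1 \<and> \<nu> 1 = 0) \<or> (\<nu> 0 = 0 \<and> \<nu> 1 = 1)) \<and> (\<forall>i. i \<noteq> 0 \<and> i \<noteq> 1 \<longrightarrow> \<nu> i = 0)"
  by (auto simp: followers_config_def ex_R_def)
lemma NE_a: "is_NE ex_R 1 cf_a \<sigma> \<nu> \<longleftrightarrow> followers_config ex_R 1 \<nu> \<and> (\<nu> 0 = 1 \<longrightarrow> \<sigma> 1 \<le> \<sigma> 0) \<and> (\<nu> 1 = 1 \<longrightarrow> \<sigma> 0 \<le> \<sigma> 1)"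
  unfolding is_NE_def fc_iff by (auto simp: fcost_def cf_a_def ex_R_def algebra_simps)
lemma NE_b: "is_NE ex_R 1 cf_b \<sigma> \<nu> \<longleftrightarrow> followers_config ex_R 1 \<nu> \<and> (\<nu> 0 = 1 \<longrightarrow> \<sigma> 0 \<le> \<sigma> 1) \<and> (\<nu> 1 = 1 \<longrightarrow> \<sigma> 1 \<le> \<sigma> 0)"
  unfolding is_NE_def fc_iff by (auto simp: fcost_def cf_b_def ex_R_def algebra_simps)
lemma lc_a: "followers_config ex_R 1 \<nu> \<Longrightarrow> lcost ex_R cl_a \<sigma> \<nu> = (if \<nu> 0 = 1 then 2 * \<sigma> 0 + \<sigma> 1 else \<sigma> 0 + 2 * \<sigma> 1)"
  unfolding fc_iff by (auto simp: lcost_def cl_a_def ex_R_def)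
lemma lc_b: "followers_config ex_R 1 \<nu> \<Longrightarrow> lcost ex_R cl_b \<sigma> \<nu> = (if \<nu> 0 = 1 then 2 * \<sigma> 1 else 2 * \<sigma> 0)"
  unfolding fc_iff by (auto simp: lcost_def cl_b_def ex_R_def)
lemma half_eq: "leader_strategy ex_R \<sigma> \<Longrightarrow> \<sigma> 0 = 1/2 \<Longrightarrow> \<sigma> = half_strategy"
  unfolding ls_iff by (auto simp: half_strategy_def ex_R_def fun_eq_iff)
lemma half_ls: "leader_strategy ex_R half_strategy"
  unfolding ls_iff by (auto simp: half_strategy_def ex_R_def)
lemma half_vals: "half_strategy 0 = 1/2" "half_strategy 1 = 1/2"
  by (auto simp: half_strategy_def ex_R_def)
definition e0 :: "nat \<Rightarrow> nat" where "e0 i = (if i = 0 then 1 else 0)"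
definition e1 :: "nat \<Rightarrow> nat" where "e1 i = (if i = 1 then 1 else 0)"
lemma e_fc: "followers_config ex_R 1 e0" "followers_config ex_R 1 e1"
  unfolding fc_iff by (auto simp: e0_def e1_def)
lemma e_vals: "e0 0 = 1" "e0 1 = 0" "e1 0 = 0" "e1 1 = 1" by (auto simp: e0_def e1_def)

lemma A1: assumes "leader_strategy ex_R \<sigma>" "is_NE ex_R 1 cf_a \<sigma> \<nu>"
  shows "lcost ex_R cl_a \<sigma> \<nu> \<ge> 3/2" "lcost ex_R cl_a \<sigma> \<nu> \<le> 3/2 \<Longrightarrow> \<sigma> = half_strategy"
proof -
  have fc: "followers_config ex_R 1 \<nu>" using assms(2) NE_a by blast
  show "lcost ex_R cl_a \<sigma> \<nu> \<ge> 3/2" using assms fc unfolding lc_a[OF fc] NE_a ls_iff fc_iff by auto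
  assume "lcost ex_R cl_a \<sigma> \<nu> \<le> 3/2"
  then have "\<sigma> 0 = 1/2" using assms fc unfolding lc_a[OF fc] NE_a ls_iff fc_iff by (auto split: if_splits)
  then show "\<sigma> = half_strategy" using half_eq assms(1) by blast
qed
lemma B1: assumes "leader_strategy ex_R \<sigma>" "is_NE ex_R 1 cf_b \<sigma> \<nu>"
  shows "lcost ex_R cl_b \<sigma> \<nu> \<ge> 1" "lcost ex_R cl_b \<sigma> \<nu> \<le> 1 \<Longrightarrow> \<sigma> = half_strategy"
proof -
  have fc: "followers_config ex_R 1 \<nu>" using assms(2) NE_b by blast
  show "lcost ex_R cl_b \<sigma> \<nu> \<ge> 1" using assms fc unfolding lc_b[OF fc] NE_b ls_iff fc_iff by auto
  assume "lcost ex_R cl_b \<sigma> \<nu> \<le> 1"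
  then have "\<sigma> 0 = 1/2" using assms fc unfolding lc_b[OF fc] NE_b ls_iff fc_iff by (auto split: if_splits)
  then show "\<sigma> = half_strategy" using half_eq assms(1) by blast
qed
lemma A_ex: "leader_strategy ex_R \<sigma> \<Longrightarrow> \<exists>\<nu>. is_NE ex_R 1 cf_a \<sigma> \<nu>"
  unfolding NE_a ls_iff using e_fc e_vals by (metis linorder_linear zero_neq_one)
lemma B_ex: "leader_strategy ex_R \<sigma> \<Longrightarrow> \<exists>\<nu>. is_NE ex_R 1 cf_b \<sigma> \<nu>"
  unfolding NE_b ls_iff using e_fc e_vals by (metis linorder_linear zero_neq_one)
lemma A_half: "is_NE ex_R 1 cf_a half_strategy \<nu> \<Longrightarrow> lcost ex_R cl_a half_strategy \<nu> = 3/2"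
  unfolding NE_a using lc_a half_vals by auto
lemma B_half: "is_NE ex_R 1 cf_b half_strategy \<nu> \<Longrightarrow> lcost ex_R cl_b half_strategy \<nu> = 1"
  unfolding NE_b using lc_b half_vals by auto
lemma A_half_NE: "is_NE ex_R 1 cf_a half_strategy e0" unfolding NE_a using e_fc e_vals half_vals by auto
lemma B_half_NE: "is_NE ex_R 1 cf_b half_strategy e0" unfolding NE_b using e_fc e_vals half_vals by auto

theorem mainTheorem18:
  shows
  "(sscg ex_R cl_a cf_a \<and>
    (\<forall>i\<in>ex_R. weakly_monotonic (cl_a i)) \<and> \<not> (\<forall>i\<in>ex_R. weakly_monotonic (cf_a i)) \<and>
    \<not> pure_strategy ex_R half_strategy \<and>
    (\<exists>\<nu>. is_OSE ex_R 1 cl_a cf_a half_strategy \<nu>) \<and>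
    (\<forall>\<sigma> \<nu>. is_OSE ex_R 1 cl_a cf_a \<sigma> \<nu> \<longrightarrow> \<sigma> = half_strategy) \<and>
    (\<exists>\<nu>. is_PSE ex_R 1 cl_a cf_a half_strategy \<nu>) \<and>
    (\<forall>\<sigma> \<nu>. is_PSE ex_R 1 cl_a cf_a \<sigma> \<nu> \<longrightarrow> \<sigma> = half_strategy))
   \<and>
   (sscg ex_R cl_b cf_b \<and>
    (\<forall>i\<in>ex_R. weakly_monotonic (cf_b i)) \<and> \<not> (\<forall>i\<in>ex_R. weakly_monotonic (cl_b i)) \<and>
    \<not> pure_strategy ex_R half_strategy \<and>
    (\<exists>\<nu>. is_OSE ex_R 1 cl_b cf_b half_strategy \<nu>) \<and>
    (\<forall>\<sigma> \<nu>. is_OSE ex_R 1 cl_b cf_b \<sigma> \<nu> \<longrightarrow> \<sigma> = half_strategy) \<and>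
    (\<exists>\<nu>. is_PSE ex_R 1 cl_b cf_b half_strategy \<nu>) \<and>
    (\<forall>\<sigma> \<nu>. is_PSE ex_R 1 cl_b cf_b \<sigma> \<nu> \<longrightarrow> \<sigma> = half_strategy))"
proof -
  have g1: "sscg ex_R cl_a cf_a" "sscg ex_R cl_b cf_b"
    by (auto simp: sscg_def ex_R_def cl_a_def cf_a_def cl_b_def cf_b_def)
  have g2: "\<forall>i\<in>ex_R. weakly_monotonic (cl_a i)" "\<forall>i\<in>ex_R. weakly_monotonic (cf_b i)"
    by (auto simp: weakly_monotonic_def cl_a_def cf_b_def)
  have g3: "\<not> (\<forall>i\<in>ex_R. weakly_monotonic (cf_a i))" "\<not> (\<forall>i\<in>ex_R. weakly_monotonic (cl_b i))"
    by (auto simp: weakly_monotonic_def cf_a_def cl_b_def ex_R_def intro!: exI[of _ 1])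
  have g4: "\<not> pure_strategy ex_R half_strategy"
    by (auto simp: pure_strategy_def half_strategy_def ex_R_def)
  have oa: "is_OSE ex_R 1 cl_a cf_a half_strategy e0"
  proof -
    have "lcost ex_R cl_a half_strategy e0 = 3/2" using A_half A_half_NE by blast
    then show ?thesis unfolding is_OSE_def using half_ls A_half_NE
      by (metis A1(1))
  qed
  have ob: "is_OSE ex_R 1 cl_b cf_b half_strategy e0"
  proof -
    have "lcost ex_R cl_b half_strategy e0 = 1" using B_half B_half_NE by blast
    then show ?thesis unfolding is_OSE_def using half_ls B_half_NE
      by (metis B1(1))
  qed
  have ua: "\<forall>\<sigma> \<nu>. is_OSE ex_R 1 cl_a cf_a \<sigma> \<nu> \<longrightarrow> \<sigma> = half_strategy"
  proof (intro allI impI)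
    fix \<sigma> \<nu> assume "is_OSE ex_R 1 cl_a cf_a \<sigma> \<nu>"
    then show "\<sigma> = half_strategy" unfolding is_OSE_def
      using half_ls A_half_NE A_half A1(2) by fastforce
  qed
  have ub: "\<forall>\<sigma> \<nu>. is_OSE ex_R 1 cl_b cf_b \<sigma> \<nu> \<longrightarrow> \<sigma> = half_strategy"
  proof (intro allI impI)
    fix \<sigma> \<nu> assume "is_OSE ex_R 1 cl_b cf_b \<sigma> \<nu>"
    then show "\<sigma> = half_strategy" unfolding is_OSE_def
      using half_ls B_half_NE B_half B1(2) by fastforce
  qed
  have pa: "is_PSE ex_R 1 cl_a cf_a half_strategy e0"
    unfolding is_PSE_def using half_ls A_half_NE A_half A1(1) A_ex by (metis order_refl)
  have pb: "is_PSE ex_R 1 cl_b cf_b half_strategy e0"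
    unfolding is_PSE_def using half_ls B_half_NE B_half B1(1) B_ex by (metis order_refl)
  have va: "\<forall>\<sigma> \<nu>. is_PSE ex_R 1 cl_a cf_a \<sigma> \<nu> \<longrightarrow> \<sigma> = half_strategy"
  proof (intro allI impI)
    fix \<sigma> \<nu> assume h: "is_PSE ex_R 1 cl_a cf_a \<sigma> \<nu>"
    then obtain \<nu>' where "is_NE ex_R 1 cf_a half_strategy \<nu>'" "lcost ex_R cl_a \<sigma> \<nu> \<le> lcost ex_R cl_a half_strategy \<nu>'"
      unfolding is_PSE_def using half_ls by blast
    then show "\<sigma> = half_strategy" using h A_half A1(2) unfolding is_PSE_def by auto
  qed
  have vb: "\<forall>\<sigma> \<nu>. is_PSE ex_R 1 cl_b cf_b \<sigma> \<nu> \<longrightarrow> \<sigma> = half_strategy"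
  proof (intro allI impI)
    fix \<sigma> \<nu> assume h: "is_PSE ex_R 1 cl_b cf_b \<sigma> \<nu>"
    then obtain \<nu>' where "is_NE ex_R 1 cf_b half_strategy \<nu>'" "lcost ex_R cl_b \<sigma> \<nu> \<le> lcost ex_R cl_b half_strategy \<nu>'"
      unfolding is_PSE_def using half_ls by blast
    then show "\<sigma> = half_strategy" using h B_half B1(2) unfolding is_PSE_def by auto
  qed
  show ?thesis using g1 g2 g3 g4 oa ob ua ub pa pb va vb by blast
qed
end
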